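(* Let $\mathcal{B}\subseteq[0,1]$ be countable. For a post-scheduling belief $\theta$ on $\mathbb{R}\times\mathcal{B}$ let $L(\theta):=\inf_{\hat e\in\mathbb{R}}\sum_{b\in\mathcal{B}}\int_{\mathbb{R}}(e-\hat e)^2\theta(e,b)\,de$. For any beliefs $\theta,\tilde\theta$ with $\theta\,\mathcal{R}\,\tilde\theta$ we have $L(\theta)\ge L(\tilde\theta)$.
   Context: A belief is a nonnegative function on $\mathbb{R}\times\mathcal{B}$ with $\sum_b\int\theta(e,b)\,de=1$. For $r\in\mathbb{R}$, $\mathcal{S}(r)$ is the set of $\nu:\mathbb{R}\to\mathbb{R}$ with $\nu(x)\ge\nu(y)$ whenever $|x-r|\le|y-r|$. For a Borel set $B$ of finite Lebesgue measure, $B_\sigma$ is the open interval centered at $0$ of the same measure; for nonnegative integrable $h$, $h_\sigma(x)=\int_0^\infty\mathbf{1}_{\{z:h(z)>s\}_\sigma}(x)ds$. For nonnegative integrable $\mu,\nu$ on $\mathbb{R}$, $\mu\prec\nu$ means $\int_{|x|\le s}\mu_\sigma\le\int_{|x|\le s}\nu_\sigma$ for all $s>0$. For beliefs, $\theta\,\mathcal{R}\,\tilde\theta$ means: $\theta(\cdot,b)\prec\tilde\theta(\cdot,b)$ for each $b\in\mathcal{B}$, and there is $r\in\mathbb{R}$ with $\tilde\theta(\cdot,b)\in\mathcal{S}(r)$ for all $b$. *)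

theory Defs
  imports "HOL-Analysis.Analysis"
begin

text \<open>A belief on R x B: theta e b, nonnegative, measurable in e, total mass 1
  (sum over b in B realised as an integral over count_space B).\<close>
definition belief :: "real set \<Rightarrow> (real \<Rightarrow> real \<Rightarrow> real) \<Rightarrow> bool" where
  "belief B \<theta> \<longleftrightarrow>
     (\<forall>e. \<forall>b\<in>B. 0 \<le> \<theta> e b) \<and>
     (\<forall>b\<in>B. (\<lambda>e. \<theta> e b) \<in> borel_measurable lborel) \<and>
     (\<integral>\<^sup>+ b. (\<integral>\<^sup>+ e. ennreal (\<theta> e b) \<partial>lborel) \<partial>count_space B) = 1"

definition symdec :: "real \<Rightarrow> (real \<Rightarrow> real) set" where
  "symdec r = {\<nu>. \<forall>x y. \<bar>x - r\<bar> \<le> \<bar>y - r\<bar> \<longrightarrow> \<nu> x \<ge> \<nu> y}"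

definition sym_set :: "real set \<Rightarrow> real set" where
  "sym_set A = {x. ennreal (2 * \<bar>x\<bar>) < emeasure lborel A}"

definition sym_rearr :: "(real \<Rightarrow> real) \<Rightarrow> real \<Rightarrow> ennreal" where
  "sym_rearr h x = (\<integral>\<^sup>+ s\<in>{0<..}. indicator (sym_set {z. h z > s}) x \<partial>lborel)"

definition majorized :: "(real \<Rightarrow> real) \<Rightarrow> (real \<Rightarrow> real) \<Rightarrow> bool" where
  "majorized \<mu> \<nu> \<longleftrightarrow> (\<forall>s>0.
     (\<integral>\<^sup>+ x\<in>{x. \<bar>x\<bar> \<le> s}. sym_rearr \<mu> x \<partial>lborel)
       \<le> (\<integral>\<^sup>+ x\<in>{x. \<bar>x\<bar> \<le> s}. sym_rearr \<nu> x \<partial>lborel))"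

definition belief_R :: "real set \<Rightarrow> (real \<Rightarrow> real \<Rightarrow> real) \<Rightarrow> (real \<Rightarrow> real \<Rightarrow> real) \<Rightarrow> bool" where
  "belief_R B \<theta> \<theta>' \<longleftrightarrow>
     (\<forall>b\<in>B. majorized (\<lambda>e. \<theta> e b) (\<lambda>e. \<theta>' e b)) \<and>
     (\<exists>r. \<forall>b\<in>B. (\<lambda>e. \<theta>' e b) \<in> symdec r)"

definition loss :: "real set \<Rightarrow> (real \<Rightarrow> real \<Rightarrow> real) \<Rightarrow> ennreal" where
  "loss B \<theta> = (INF eh. \<integral>\<^sup>+ b. (\<integral>\<^sup>+ e. ennreal ((e - eh)\<^sup>2 * \<theta> e b) \<partial>lborel) \<partial>count_space B)"

end

theory Submission
  imports Defs
begin


lemma LC: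
  fixes f :: "real \<Rightarrow> real" and \<omega> :: "real \<Rightarrow> ennreal"
  assumes fm: "f \<in> borel_measurable lborel" and f0: "\<And>e. 0 \<le> f e"
    and wm: "\<omega> \<in> borel_measurable lborel"
  shows "(\<integral>\<^sup>+ e. ennreal (f e) * \<omega> e \<partial>lborel)
       = (\<integral>\<^sup>+ s\<in>{0<..}. (\<integral>\<^sup>+ e. \<omega> e * indicator {z. s < f z} e \<partial>lborel) \<partial>lborel)"
proof -
  have "(\<integral>\<^sup>+ e. ennreal (f e) * \<omega> e \<partial>lborel)
     = (\<integral>\<^sup>+ e. (\<integral>\<^sup>+ s. indicator {0<..<f e} s * \<omega> e \<partial>lborel) \<partial>lborel)"
    apply (intro nn_integral_cong)
    apply (subst nn_integral_multc)
    using f0 by auto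
  also have "\<dots> = (\<integral>\<^sup>+ s. (\<integral>\<^sup>+ e. indicator {0<..<f e} s * \<omega> e \<partial>lborel) \<partial>lborel)"
    apply (rule lborel_pair.Fubini'[symmetric])
    apply (simp add: case_prod_unfold indicator_def)
    using fm wm by measurable
  also have "\<dots> = (\<integral>\<^sup>+ s\<in>{0<..}. (\<integral>\<^sup>+ e. \<omega> e * indicator {z. s < f z} e \<partial>lborel) \<partial>lborel)"
    apply (intro nn_integral_cong)
    apply (subst nn_integral_multc[symmetric])
    subgoal using fm wm by simp
    apply (intro nn_integral_cong)
    by (auto simp: indicator_def)
  finally show ?thesis .
qed




lemma mminus: "(m::ennreal) - min T m = m - T"
  by (cases m; cases T) (auto simp: min_def ennreal_minus top_unique ennreal_eq_0_iff)

lemma mf_meas: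
  fixes f :: "real \<Rightarrow> real"
  assumes fm: "f \<in> borel_measurable lborel"
  shows "(\<lambda>s. emeasure lborel {z. s < f z}) \<in> borel_measurable borel"
proof -
  have "(\<lambda>s. emeasure lborel {z. s < f z}) = (\<lambda>s. \<integral>\<^sup>+ z. indicator {z. s < f z} z \<partial>lborel)"
    by (rule ext, subst nn_integral_indicator) (use fm in auto)
  also have "\<dots> \<in> borel_measurable borel"
    apply (rule lborel.borel_measurable_nn_integral[where N=borel, simplified])
    apply (simp add: case_prod_unfold indicator_def)
    using fm by measurable
  finally show ?thesis .
qed

lemma box_meas:
  fixes S :: real and m :: ennreal
  assumes S: "S > 0"
  shows "emeasure lborel ({x. ennreal (2 * \<bar>x\<bar>) < m} \<inter> {x. \<bar>x\<bar> \<le> S}) = min (ennreal (2*S)) m"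
proof (cases "m \<le> ennreal (2*S)")
  case True
  obtain a where a: "m = ennreal a" "0 \<le> a" "a \<le> 2*S"
  proof (cases m)
    case (real r)
    then show ?thesis using True S that by (simp add: ennreal_le_iff)
  next
    case top
    then show ?thesis using True by (simp add: top_unique)
  qed
  have iff: "ennreal (2 * \<bar>x\<bar>) < m \<longleftrightarrow> 2 * \<bar>x\<bar> < a" for x
    unfolding a(1) by (rule ennreal_less_iff) simp
  have "{x. ennreal (2 * \<bar>x\<bar>) < m} \<inter> {x. \<bar>x\<bar> \<le> S} = {-a/2<..<a/2}"
    unfolding iff using a(3) by (auto simp: abs_less_iff)
  moreover have "min (ennreal (2*S)) m = m" using True by (rule min_absorb2)
  ultimately show ?thesis using a(1,2) by simp
next
  case False
  have "{x. ennreal (2 * \<bar>x\<bar>) < m} \<inter> {x. \<bar>x\<bar> \<le> S} = {-S..S}"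
  proof safe
    fix x :: real assume x: "x \<in> {-S..S}"
    then have "ennreal (2 * \<bar>x\<bar>) \<le> ennreal (2 * S)" by (intro ennreal_leI) auto
    also have "\<dots> < m" using False by simp
    finally show "ennreal (2 * \<bar>x\<bar>) < m" .
    show "\<bar>x\<bar> \<le> S" using x by auto
  qed auto
  moreover have "min (ennreal (2*S)) m = ennreal (2*S)" using False by simp
  ultimately show ?thesis using S by simp
qed




lemma rearr_box:
  fixes f :: "real \<Rightarrow> real" and S :: real
  assumes fm: "f \<in> borel_measurable lborel" and S: "S > 0"
  shows "(\<integral>\<^sup>+ x\<in>{x. \<bar>x\<bar> \<le> S}. sym_rearr f x \<partial>lborel)
       = (\<integral>\<^sup>+ s\<in>{0<..}. min (ennreal (2*S)) (emeasure lborel {z. s < f z}) \<partial>lborel)"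
proof -
  have mm[measurable]: "(\<lambda>s. emeasure lborel {z. s < f z}) \<in> borel_measurable borel"
    using mf_meas[OF fm] .
  have "(\<integral>\<^sup>+ x\<in>{x. \<bar>x\<bar> \<le> S}. sym_rearr f x \<partial>lborel)
     = (\<integral>\<^sup>+ x. (\<integral>\<^sup>+ s. indicator (sym_set {z. s < f z}) x * indicator {0<..} s * indicator {x. \<bar>x\<bar> \<le> S} x \<partial>lborel) \<partial>lborel)"
    unfolding sym_rearr_def
    apply (intro nn_integral_cong)
    apply (subst nn_integral_multc)
    by (auto simp: sym_set_def)
  also have "\<dots> = (\<integral>\<^sup>+ s. (\<integral>\<^sup>+ x. indicator (sym_set {z. s < f z}) x * indicator {0<..} s * indicator {x. \<bar>x\<bar> \<le> S} x \<partial>lborel) \<partial>lborel)"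
    apply (rule lborel_pair.Fubini'[symmetric])
    unfolding sym_set_def
    apply (simp add: case_prod_unfold indicator_def)
    by measurable
  also have "\<dots> = (\<integral>\<^sup>+ s\<in>{0<..}. min (ennreal (2*S)) (emeasure lborel {z. s < f z}) \<partial>lborel)"
  proof (intro nn_integral_cong)
    fix s :: real
    have "(\<integral>\<^sup>+ x. indicator (sym_set {z. s < f z}) x * indicator {0<..} s * indicator {x. \<bar>x\<bar> \<le> S} x \<partial>lborel)
       = (\<integral>\<^sup>+ x. indicator ({x. ennreal (2 * \<bar>x\<bar>) < emeasure lborel {z. s < f z}} \<inter> {x. \<bar>x\<bar> \<le> S}) x * indicator {0<..} s \<partial>lborel)"
      by (intro nn_integral_cong) (auto simp: sym_set_def indicator_def)
    also have "\<dots> = emeasure lborel ({x. ennreal (2 * \<bar>x\<bar>) < emeasure lborel {z. s < f z}} \<inter> {x. \<bar>x\<bar> \<le> S}) * indicator {0<..} s"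
      apply (subst nn_integral_multc)
       apply measurable
      done
    also have "\<dots> = min (ennreal (2*S)) (emeasure lborel {z. s < f z}) * indicator {0<..} s"
      using box_meas[OF S] by simp
    finally show "(\<integral>\<^sup>+ x. indicator (sym_set {z. s < f z}) x * indicator {0<..} s * indicator {x. \<bar>x\<bar> \<le> S} x \<partial>lborel)
       = min (ennreal (2*S)) (emeasure lborel {z. s < f z}) * indicator {0<..} s" .
  qed
  finally show ?thesis .
qed

lemma rearr_box':
  fixes f :: "real \<Rightarrow> real" and T :: real
  assumes fm: "f \<in> borel_measurable lborel" and T: "T > 0"
  shows "(\<integral>\<^sup>+ x\<in>{x. \<bar>x\<bar> \<le> T / 2}. sym_rearr f x \<partial>lborel)
       = (\<integral>\<^sup>+ s\<in>{0<..}. min (ennreal T) (emeasure lborel {z. s < f z}) \<partial>lborel)"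
  using rearr_box[OF fm, of "T/2"] T by simp




lemma mass_lc:
  fixes f :: "real \<Rightarrow> real"
  assumes fm: "f \<in> borel_measurable lborel" and f0: "\<And>e. 0 \<le> f e"
  shows "(\<integral>\<^sup>+ e. ennreal (f e) \<partial>lborel) = (\<integral>\<^sup>+ s\<in>{0<..}. emeasure lborel {z. s < f z} \<partial>lborel)"
  using LC[OF fm f0, of "\<lambda>_. 1"] fm by simp

lemma SUP_min_nat: "(SUP n. min (ennreal (real (Suc n))) m) = (m::ennreal)"
proof (rule antisym)
  show "(SUP n. min (ennreal (real (Suc n))) m) \<le> m" by (rule SUP_least) simp
  show "m \<le> (SUP n. min (ennreal (real (Suc n))) m)"
  proof (cases m)
    case (real r)
    have "r \<le> real (Suc (nat \<lceil>r\<rceil>))" by linarith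
    then have "m \<le> ennreal (real (Suc (nat \<lceil>r\<rceil>)))" unfolding real by (rule ennreal_leI)
    then have "m = min (ennreal (real (Suc (nat \<lceil>r\<rceil>)))) m"
      by (rule min_absorb2[symmetric])
    also have "\<dots> \<le> (SUP n. min (ennreal (real (Suc n))) m)" by (rule SUP_upper) simp
    finally show ?thesis .
  next
    case top
    have "(SUP n. min (ennreal (real (Suc n))) m) = (SUP n. ennreal (real (Suc n)))"
      using top by simp
    also have "\<dots> = top"
    proof -
      have "top = (SUP x. of_nat x :: ennreal)" by (simp add: ennreal_SUP_of_nat_eq_top)
      also have "\<dots> \<le> (SUP n. ennreal (real (Suc n)))"
        by (rule SUP_mono) (metis ennreal_of_nat_eq_real_of_nat le_SucI of_nat_mono order_refl)
      finally show ?thesis by (simp add: top_unique)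
    qed
    finally have X: "(SUP n. min (ennreal (real (Suc n))) m) = top" .
    show ?thesis unfolding X by simp
  qed
qed

lemma maj_mass:
  fixes f g :: "real \<Rightarrow> real"
  assumes fm: "f \<in> borel_measurable lborel" and f0: "\<And>e. 0 \<le> f e"
    and gm: "g \<in> borel_measurable lborel" and g0: "\<And>e. 0 \<le> g e"
    and maj: "majorized f g"
  shows "(\<integral>\<^sup>+ e. ennreal (f e) \<partial>lborel) \<le> (\<integral>\<^sup>+ e. ennreal (g e) \<partial>lborel)"
proof -
  have mmf[measurable]: "(\<lambda>s. emeasure lborel {z. s < f z}) \<in> borel_measurable borel"
    using mf_meas[OF fm] .
  have "(\<integral>\<^sup>+ e. ennreal (f e) \<partial>lborel)
     = (\<integral>\<^sup>+ s. (SUP n. min (ennreal (real (Suc n))) (emeasure lborel {z. s < f z}) * indicator {0<..} s) \<partial>lborel)"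
    unfolding mass_lc[OF fm f0]
    by (intro nn_integral_cong) (simp only: SUP_min_nat flip: SUP_mult_right_ennreal)
  also have "\<dots> = (SUP n. (\<integral>\<^sup>+ s. min (ennreal (real (Suc n))) (emeasure lborel {z. s < f z}) * indicator {0<..} s \<partial>lborel))"
    apply (rule nn_integral_monotone_convergence_SUP)
    subgoal by (auto simp: incseq_def le_fun_def intro!: mult_right_mono min.mono)
    by measurable
  also have "\<dots> \<le> (\<integral>\<^sup>+ e. ennreal (g e) \<partial>lborel)"
  proof (rule SUP_least)
    fix n
    have "(\<integral>\<^sup>+ s. min (ennreal (real (Suc n))) (emeasure lborel {z. s < f z}) * indicator {0<..} s \<partial>lborel)
       = (\<integral>\<^sup>+ x\<in>{x. \<bar>x\<bar> \<le> real (Suc n) / 2}. sym_rearr f x \<partial>lborel)"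
      by (rule rearr_box'[OF fm, symmetric]) simp
    also have "\<dots> \<le> (\<integral>\<^sup>+ x\<in>{x. \<bar>x\<bar> \<le> real (Suc n) / 2}. sym_rearr g x \<partial>lborel)"
    proof -
      have h2: "real (Suc n)/2 > 0" by simp
      show ?thesis using maj h2 unfolding majorized_def by blast
    qed
    also have "\<dots> = (\<integral>\<^sup>+ s. min (ennreal (real (Suc n))) (emeasure lborel {z. s < g z}) * indicator {0<..} s \<partial>lborel)"
      by (rule rearr_box'[OF gm]) simp
    also have "\<dots> \<le> (\<integral>\<^sup>+ s. emeasure lborel {z. s < g z} * indicator {0<..} s \<partial>lborel)"
      by (intro nn_integral_mono mult_right_mono) auto
    also have "\<dots> = (\<integral>\<^sup>+ e. ennreal (g e) \<partial>lborel)"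
      using mass_lc[OF gm g0] by simp
    finally show "(\<integral>\<^sup>+ s. min (ennreal (real (Suc n))) (emeasure lborel {z. s < f z}) * indicator {0<..} s \<partial>lborel) \<le> (\<integral>\<^sup>+ e. ennreal (g e) \<partial>lborel)" .
  qed
  finally show ?thesis .
qed




lemma diff_form:
  fixes h :: "real \<Rightarrow> real" and T :: real
  assumes hm: "h \<in> borel_measurable lborel" and h0: "\<And>e. 0 \<le> h e"
    and fin: "(\<integral>\<^sup>+ e. ennreal (h e) \<partial>lborel) \<noteq> \<infinity>"
  shows "(\<integral>\<^sup>+ s\<in>{0<..}. (emeasure lborel {z. s < h z} - ennreal T) \<partial>lborel)
       = (\<integral>\<^sup>+ e. ennreal (h e) \<partial>lborel) - (\<integral>\<^sup>+ s\<in>{0<..}. min (ennreal T) (emeasure lborel {z. s < h z}) \<partial>lborel)"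
proof -
  have mm[measurable]: "(\<lambda>s. emeasure lborel {z. s < h z}) \<in> borel_measurable borel"
    using mf_meas[OF hm] .
  have M: "(\<integral>\<^sup>+ e. ennreal (h e) \<partial>lborel) = (\<integral>\<^sup>+ s\<in>{0<..}. emeasure lborel {z. s < h z} \<partial>lborel)"
    using LC[OF hm h0, of "\<lambda>_. 1"] hm by simp
  have "(\<integral>\<^sup>+ s\<in>{0<..}. (emeasure lborel {z. s < h z} - ennreal T) \<partial>lborel)
      = (\<integral>\<^sup>+ s. emeasure lborel {z. s < h z} * indicator {0<..} s - min (ennreal T) (emeasure lborel {z. s < h z}) * indicator {0<..} s \<partial>lborel)"
    by (intro nn_integral_cong) (auto simp: indicator_def mminus)
  also have "\<dots> = (\<integral>\<^sup>+ s\<in>{0<..}. emeasure lborel {z. s < h z} \<partial>lborel) - (\<integral>\<^sup>+ s\<in>{0<..}. min (ennreal T) (emeasure lborel {z. s < h z}) \<partial>lborel)"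
  proof (rule nn_integral_diff)
    have "(\<integral>\<^sup>+ s\<in>{0<..}. min (ennreal T) (emeasure lborel {z. s < h z}) \<partial>lborel) \<le> (\<integral>\<^sup>+ s\<in>{0<..}. emeasure lborel {z. s < h z} \<partial>lborel)"
      by (intro nn_integral_mono mult_right_mono) auto
    then show "(\<integral>\<^sup>+ s\<in>{0<..}. min (ennreal T) (emeasure lborel {z. s < h z}) \<partial>lborel) \<noteq> \<infinity>"
      using fin M by (auto simp: top_unique)
  qed (auto intro!: mult_right_mono)
  finally show ?thesis using M by simp
qed

lemma maj_cmp:
  fixes f g :: "real \<Rightarrow> real" and T :: real
  assumes fm: "f \<in> borel_measurable lborel" and f0: "\<And>e. 0 \<le> f e"
    and gm: "g \<in> borel_measurable lborel" and g0: "\<And>e. 0 \<le> g e"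
    and maj: "majorized f g"
    and eq: "(\<integral>\<^sup>+ e. ennreal (f e) \<partial>lborel) = (\<integral>\<^sup>+ e. ennreal (g e) \<partial>lborel)"
    and fin: "(\<integral>\<^sup>+ e. ennreal (g e) \<partial>lborel) \<noteq> \<infinity>"
    and T: "T > 0"
  shows "(\<integral>\<^sup>+ s\<in>{0<..}. (emeasure lborel {z. s < g z} - ennreal T) \<partial>lborel)
       \<le> (\<integral>\<^sup>+ s\<in>{0<..}. (emeasure lborel {z. s < f z} - ennreal T) \<partial>lborel)"
proof -
  have "(\<integral>\<^sup>+ s\<in>{0<..}. min (ennreal T) (emeasure lborel {z. s < f z}) \<partial>lborel)
      = (\<integral>\<^sup>+ x\<in>{x. \<bar>x\<bar> \<le> T / 2}. sym_rearr f x \<partial>lborel)"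
    by (rule rearr_box'[OF fm T, symmetric])
  also have "\<dots> \<le> (\<integral>\<^sup>+ x\<in>{x. \<bar>x\<bar> \<le> T / 2}. sym_rearr g x \<partial>lborel)"
  proof -
    have h2: "T/2 > 0" using T by simp
    show ?thesis using maj h2 unfolding majorized_def by blast
  qed
  also have "\<dots> = (\<integral>\<^sup>+ s\<in>{0<..}. min (ennreal T) (emeasure lborel {z. s < g z}) \<partial>lborel)"
    by (rule rearr_box'[OF gm T])
  finally have le: "(\<integral>\<^sup>+ s\<in>{0<..}. min (ennreal T) (emeasure lborel {z. s < f z}) \<partial>lborel)
     \<le> (\<integral>\<^sup>+ s\<in>{0<..}. min (ennreal T) (emeasure lborel {z. s < g z}) \<partial>lborel)" .
  show ?thesis
    unfolding diff_form[OF fm f0 fin[folded eq]] diff_form[OF gm g0 fin]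
    using le eq by (auto intro: ennreal_minus_mono)
qed




lemma double_lc:
  fixes h :: "real \<Rightarrow> real" and c :: real
  assumes hm: "h \<in> borel_measurable lborel" and h0: "\<And>e. 0 \<le> h e"
  shows "(\<integral>\<^sup>+ e. ennreal ((e - c)\<^sup>2 * h e) \<partial>lborel)
    = (\<integral>\<^sup>+ u\<in>{0<..}. (\<integral>\<^sup>+ s\<in>{0<..}. emeasure lborel ({e. u < (e - c)\<^sup>2} \<inter> {z. s < h z}) \<partial>lborel) \<partial>lborel)"
proof -
  have "(\<integral>\<^sup>+ e. ennreal ((e - c)\<^sup>2 * h e) \<partial>lborel) = (\<integral>\<^sup>+ e. ennreal ((e - c)\<^sup>2) * ennreal (h e) \<partial>lborel)"
    by (intro nn_integral_cong) (simp add: ennreal_mult h0)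
  also have "\<dots> = (\<integral>\<^sup>+ u\<in>{0<..}. (\<integral>\<^sup>+ e. ennreal (h e) * indicator {z. u < (z - c)\<^sup>2} e \<partial>lborel) \<partial>lborel)"
    by (rule LC) (use hm in auto)
  also have "\<dots> = (\<integral>\<^sup>+ u\<in>{0<..}. (\<integral>\<^sup>+ s\<in>{0<..}. emeasure lborel ({e. u < (e - c)\<^sup>2} \<inter> {z. s < h z}) \<partial>lborel) \<partial>lborel)"
  proof -
    have eq: "(\<integral>\<^sup>+ e. ennreal (h e) * indicator {z. u < (z - c)\<^sup>2} e \<partial>lborel)
        = (\<integral>\<^sup>+ s\<in>{0<..}. emeasure lborel ({e. u < (e - c)\<^sup>2} \<inter> {z. s < h z}) \<partial>lborel)" for u
    proof -
      have "(\<integral>\<^sup>+ e. ennreal (h e) * indicator {z. u < (z - c)\<^sup>2} e \<partial>lborel)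
        = (\<integral>\<^sup>+ s\<in>{0<..}. (\<integral>\<^sup>+ e. indicator {z. u < (z - c)\<^sup>2} e * indicator {z. s < h z} e \<partial>lborel) \<partial>lborel)"
        by (rule LC[OF hm h0]) simp
      also have "\<dots> = (\<integral>\<^sup>+ s\<in>{0<..}. emeasure lborel ({e. u < (e - c)\<^sup>2} \<inter> {z. s < h z}) \<partial>lborel)"
        apply (intro nn_integral_cong)
        apply (subst nn_integral_indicator[symmetric])
        using hm apply measurable
        by (auto intro!: nn_integral_cong simp: indicator_def)
      finally show ?thesis .
    qed
    show ?thesis by (simp only: eq)
  qed
  finally show ?thesis .
qed

lemma Dmeas:
  fixes c u :: real
  assumes "0 \<le> u"
  shows "emeasure lborel {e. (e - c)\<^sup>2 \<le> u} = ennreal (2 * sqrt u)"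
proof -
  have "{e. (e - c)\<^sup>2 \<le> u} = {c - sqrt u .. c + sqrt u}"
  proof safe
    fix x assume "(x - c)\<^sup>2 \<le> u"
    from real_sqrt_le_mono[OF this] have "\<bar>x - c\<bar> \<le> sqrt u" by simp
    then show "x \<in> {c - sqrt u .. c + sqrt u}" by auto
  next
    fix x assume "x \<in> {c - sqrt u .. c + sqrt u}"
    then have "\<bar>x - c\<bar> \<le> sqrt u" by auto
    then have "\<bar>x - c\<bar>\<^sup>2 \<le> (sqrt u)\<^sup>2" by (rule power_mono) auto
    then show "(x - c)\<^sup>2 \<le> u" using assms by simp
  qed
  then show ?thesis using assms by simp
qed

lemma fside:
  fixes c u :: real and A :: "real set"
  assumes "0 \<le> u" and A: "A \<in> sets lborel"
  shows "emeasure lborel A - ennreal (2 * sqrt u) \<le> emeasure lborel ({e. u < (e - c)\<^sup>2} \<inter> A)"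
proof -
  have "A \<subseteq> ({e. u < (e - c)\<^sup>2} \<inter> A) \<union> {e. (e - c)\<^sup>2 \<le> u}" by auto
  then have "emeasure lborel A \<le> emeasure lborel (({e. u < (e - c)\<^sup>2} \<inter> A) \<union> {e. (e - c)\<^sup>2 \<le> u})"
    by (intro emeasure_mono) (use A in auto)
  also have "\<dots> \<le> emeasure lborel ({e. u < (e - c)\<^sup>2} \<inter> A) + emeasure lborel {e. (e - c)\<^sup>2 \<le> u}"
    by (intro emeasure_subadditive) (use A in auto)
  finally show ?thesis unfolding Dmeas[OF assms(1)]
    by (simp add: ennreal_minus_le_iff add.commute)
qed

lemma gside:
  fixes r u s :: real and g :: "real \<Rightarrow> real"
  assumes "0 \<le> u" and gm: "g \<in> borel_measurable lborel" and sd: "g \<in> symdec r"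
  shows "emeasure lborel ({e. u < (e - r)\<^sup>2} \<inter> {z. s < g z}) \<le> emeasure lborel {z. s < g z} - ennreal (2 * sqrt u)"
proof (cases "{e. (e - r)\<^sup>2 \<le> u} \<subseteq> {z. s < g z}")
  case True
  have "{e. u < (e - r)\<^sup>2} \<inter> {z. s < g z} = {z. s < g z} - {e. (e - r)\<^sup>2 \<le> u}" by auto
  moreover have "emeasure lborel ({z. s < g z} - {e. (e - r)\<^sup>2 \<le> u}) = emeasure lborel {z. s < g z} - emeasure lborel {e. (e - r)\<^sup>2 \<le> u}"
    by (rule emeasure_Diff) (use True Dmeas[OF assms(1)] gm in auto)
  ultimately show ?thesis using Dmeas[OF assms(1)] by simp
next
  case False
  then obtain x where x: "(x - r)\<^sup>2 \<le> u" "g x \<le> s"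
    by (metis (mono_tags, lifting) mem_Collect_eq not_le subsetI)
  have "{e. u < (e - r)\<^sup>2} \<inter> {z. s < g z} = {}"
  proof safe
    fix e assume e: "u < (e - r)\<^sup>2" "s < g e"
    then have "(x - r)\<^sup>2 \<le> (e - r)\<^sup>2" using x by simp
    then have "\<bar>x - r\<bar> \<le> \<bar>e - r\<bar>" by (simp add: abs_le_square_iff)
    then have "g e \<le> g x" using sd unfolding symdec_def by auto
    then show "e \<in> {}" using e x by simp
  qed
  then show ?thesis by simp
qed




lemma per_b:
  fixes f g :: "real \<Rightarrow> real" and c r :: real
  assumes fm: "f \<in> borel_measurable lborel" and f0: "\<And>e. 0 \<le> f e"
    and gm: "g \<in> borel_measurable lborel" and g0: "\<And>e. 0 \<le> g e"
    and maj: "majorized f g" and sd: "g \<in> symdec r"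
    and eq: "(\<integral>\<^sup>+ e. ennreal (f e) \<partial>lborel) = (\<integral>\<^sup>+ e. ennreal (g e) \<partial>lborel)"
    and fin: "(\<integral>\<^sup>+ e. ennreal (g e) \<partial>lborel) \<noteq> \<infinity>"
  shows "(\<integral>\<^sup>+ e. ennreal ((e - r)\<^sup>2 * g e) \<partial>lborel) \<le> (\<integral>\<^sup>+ e. ennreal ((e - c)\<^sup>2 * f e) \<partial>lborel)"
proof -
  have inner: "(\<integral>\<^sup>+ s\<in>{0<..}. emeasure lborel ({e. u < (e - r)\<^sup>2} \<inter> {z. s < g z}) \<partial>lborel)
     \<le> (\<integral>\<^sup>+ s\<in>{0<..}. emeasure lborel ({e. u < (e - c)\<^sup>2} \<inter> {z. s < f z}) \<partial>lborel)"
    if u: "u > 0" for u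
  proof -
    have "(\<integral>\<^sup>+ s\<in>{0<..}. emeasure lborel ({e. u < (e - r)\<^sup>2} \<inter> {z. s < g z}) \<partial>lborel)
       \<le> (\<integral>\<^sup>+ s\<in>{0<..}. (emeasure lborel {z. s < g z} - ennreal (2 * sqrt u)) \<partial>lborel)"
      by (intro nn_integral_mono mult_right_mono gside[OF _ gm sd]) (use u in auto)
    also have "\<dots> \<le> (\<integral>\<^sup>+ s\<in>{0<..}. (emeasure lborel {z. s < f z} - ennreal (2 * sqrt u)) \<partial>lborel)"
      by (rule maj_cmp[OF fm f0 gm g0 maj eq fin]) (use u in simp)
    also have "\<dots> \<le> (\<integral>\<^sup>+ s\<in>{0<..}. emeasure lborel ({e. u < (e - c)\<^sup>2} \<inter> {z. s < f z}) \<partial>lborel)"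
      by (intro nn_integral_mono mult_right_mono fside) (use u fm in auto)
    finally show ?thesis .
  qed
  show ?thesis
    unfolding double_lc[OF fm f0] double_lc[OF gm g0]
    apply (intro nn_integral_mono)
    subgoal for u using inner[of u] by (cases "u > 0") auto
    done
qed

lemma sum_eq:
  fixes a c :: "real \<Rightarrow> ennreal"
  assumes le: "\<And>b. b \<in> B \<Longrightarrow> a b \<le> c b"
    and eq: "(\<integral>\<^sup>+ b. a b \<partial>count_space B) = (\<integral>\<^sup>+ b. c b \<partial>count_space B)"
    and fin: "(\<integral>\<^sup>+ b. c b \<partial>count_space B) \<noteq> \<infinity>"
    and b: "b \<in> B"
  shows "a b = c b" "c b \<noteq> \<infinity>"
proof -
  have "(\<integral>\<^sup>+ b. c b \<partial>count_space B) = (\<integral>\<^sup>+ b. a b + (c b - a b) \<partial>count_space B)"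
    by (intro nn_integral_cong) (simp add: le add_diff_inverse_ennreal)
  also have "\<dots> = (\<integral>\<^sup>+ b. a b \<partial>count_space B) + (\<integral>\<^sup>+ b. (c b - a b) \<partial>count_space B)"
    by (rule nn_integral_add) auto
  finally have "(\<integral>\<^sup>+ b. a b \<partial>count_space B) + (\<integral>\<^sup>+ b. (c b - a b) \<partial>count_space B)
      = (\<integral>\<^sup>+ b. a b \<partial>count_space B) + 0"
    using eq by simp
  then have "(\<integral>\<^sup>+ b. (c b - a b) \<partial>count_space B) = 0"
    using eq fin by (simp only: ennreal_add_left_cancel) simp
  then have "AE x in count_space B. c x - a x = 0"
    by (subst (asm) nn_integral_0_iff_AE) auto
  then have "c b - a b = 0" using b by (simp add: AE_count_space)
  then have "c b \<le> a b" by (rule ennreal_minus_eq_0)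
  then show "a b = c b" using le[OF b] by (rule antisym[rotated])
  have "c b = (\<integral>\<^sup>+ x. c x * indicator {b} x \<partial>count_space B)"
    using b by (simp add: nn_integral_indicator_singleton)
  also have "\<dots> \<le> (\<integral>\<^sup>+ b. c b \<partial>count_space B)"
    by (intro nn_integral_mono) (auto simp: indicator_def)
  finally show "c b \<noteq> \<infinity>" using fin by (auto simp: top_unique)
qed

theorem lemma13:
  fixes B :: "real set" and \<theta> \<theta>' :: "real \<Rightarrow> real \<Rightarrow> real"
  assumes "countable B" and "B \<subseteq> {0..1}"
    and "belief B \<theta>" and "belief B \<theta>'"
    and "belief_R B \<theta> \<theta>'"
  shows "loss B \<theta> \<ge> loss B \<theta>'"
proof -
  have t0: "\<And>e b. b \<in> B \<Longrightarrow> 0 \<le> \<theta> e b" and tm: "\<And>b. b \<in> B \<Longrightarrow> (\<lambda>e. \<theta> e b) \<in> borel_measurable lborel"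
    and t1: "(\<integral>\<^sup>+ b. (\<integral>\<^sup>+ e. ennreal (\<theta> e b) \<partial>lborel) \<partial>count_space B) = 1"
    using assms(3) unfolding belief_def by auto
  have s0: "\<And>e b. b \<in> B \<Longrightarrow> 0 \<le> \<theta>' e b" and sm: "\<And>b. b \<in> B \<Longrightarrow> (\<lambda>e. \<theta>' e b) \<in> borel_measurable lborel"
    and s1: "(\<integral>\<^sup>+ b. (\<integral>\<^sup>+ e. ennreal (\<theta>' e b) \<partial>lborel) \<partial>count_space B) = 1"
    using assms(4) unfolding belief_def by auto
  have maj: "\<And>b. b \<in> B \<Longrightarrow> majorized (\<lambda>e. \<theta> e b) (\<lambda>e. \<theta>' e b)"
    using assms(5) unfolding belief_R_def by auto
  obtain r where sd: "\<And>b. b \<in> B \<Longrightarrow> (\<lambda>e. \<theta>' e b) \<in> symdec r"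
    using assms(5) unfolding belief_R_def by auto
  have le: "(\<integral>\<^sup>+ e. ennreal (\<theta> e b) \<partial>lborel) \<le> (\<integral>\<^sup>+ e. ennreal (\<theta>' e b) \<partial>lborel)" if "b \<in> B" for b
    by (rule maj_mass[OF tm[OF that] t0[OF that] sm[OF that] s0[OF that] maj[OF that]])
  have eqb: "(\<integral>\<^sup>+ e. ennreal (\<theta> e b) \<partial>lborel) = (\<integral>\<^sup>+ e. ennreal (\<theta>' e b) \<partial>lborel)"
    and finb: "(\<integral>\<^sup>+ e. ennreal (\<theta>' e b) \<partial>lborel) \<noteq> \<infinity>" if "b \<in> B" for b
    using sum_eq[of B "\<lambda>b. \<integral>\<^sup>+ e. ennreal (\<theta> e b) \<partial>lborel" "\<lambda>b. \<integral>\<^sup>+ e. ennreal (\<theta>' e b) \<partial>lborel", OF le]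
      t1 s1 that by auto
  have key: "(\<integral>\<^sup>+ b. (\<integral>\<^sup>+ e. ennreal ((e - r)\<^sup>2 * \<theta>' e b) \<partial>lborel) \<partial>count_space B)
     \<le> (\<integral>\<^sup>+ b. (\<integral>\<^sup>+ e. ennreal ((e - eh)\<^sup>2 * \<theta> e b) \<partial>lborel) \<partial>count_space B)" for eh
    apply (rule nn_integral_mono)
    subgoal for b
      by (rule per_b[OF tm t0 sm s0 maj sd eqb finb]) auto
    done
  show ?thesis
    unfolding loss_def
  proof (rule INF_greatest)
    fix eh :: real
    show "(INF eh. \<integral>\<^sup>+ b. (\<integral>\<^sup>+ e. ennreal ((e - eh)\<^sup>2 * \<theta>' e b) \<partial>lborel) \<partial>count_space B)
       \<le> (\<integral>\<^sup>+ b. (\<integral>\<^sup>+ e. ennreal ((e - eh)\<^sup>2 * \<theta> e b) \<partial>lborel) \<partial>count_space B)"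
      by (rule INF_lower2[of r]) (auto intro: key)
  qed
qed


end
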